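(* For all $m\ge2$ and $n\ge1$, $CP_{m,n}\cap SDNN_{m,n}=SCP_{m,n}$.
   Context: $\mathbb{S}_{m,n}$: symmetric real $m$th order $n$-dimensional tensors. $(u^m)_{i_1\ldots i_m}=u_{i_1}\cdots u_{i_m}$; $(\mathcal{A}x^{m-1})_i=\sum_{i_2,\dots,i_m}a_{ii_2\ldots i_m}x_{i_2}\cdots x_{i_m}$; an H-eigenvalue of $\mathcal{A}$ is $\lambda\in\mathbb{R}$ with $\mathcal{A}x^{m-1}=\lambda(x_i^{m-1})_i$ for some nonzero $x\in\mathbb{R}^n$. $SDNN_{m,n}$ is the set of $\mathcal{A}\in\mathbb{S}_{m,n}$ with all entries nonnegative and all H-eigenvalues positive. $CP_{m,n}$ is the set of $\mathcal{A}=\sum_{k=1}^r(u^{(k)})^m$ with $u^{(k)}\in\mathbb{R}^n_+$; $SCP_{m,n}$ is the set of such $\mathcal{A}$ admitting a decomposition with $\mathrm{span}\{u^{(1)},\dots,u^{(r)}\}=\mathbb{R}^n$. *)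

theory Defs
  imports "HOL-Analysis.Analysis" "HOL-Library.Multiset"
begin

text \<open>An m-th order n-dimensional real tensor is represented as a function on index
lists over the finite index type 'n (with CARD('n) = n); only lists of length m are
meaningful, and the tensor is required to vanish on all other lists.\<close>

type_synonym 'n tensor = "'n list \<Rightarrow> real"

definition sym_tensors :: "nat \<Rightarrow> ('n::finite) tensor set" where
  "sym_tensors m = {A. (\<forall>xs. length xs \<noteq> m \<longrightarrow> A xs = 0) \<and>
      (\<forall>xs ys. length xs = m \<longrightarrow> mset xs = mset ys \<longrightarrow> A xs = A ys)}"

definition tpow :: "nat \<Rightarrow> real ^ ('n::finite) \<Rightarrow> 'n tensor" where
  "tpow m u = (\<lambda>xs. if length xs = m then (\<Prod>i\<leftarrow>xs. u $ i) else 0)"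

definition tapply :: "nat \<Rightarrow> ('n::finite) tensor \<Rightarrow> real ^ 'n \<Rightarrow> real ^ 'n" where
  "tapply m A x = (\<chi> i. \<Sum>is\<in>{is::'n list. length is = m - 1}. A (i # is) * (\<Prod>j\<leftarrow>is. x $ j))"

definition H_eigenvalue :: "nat \<Rightarrow> ('n::finite) tensor \<Rightarrow> real \<Rightarrow> bool" where
  "H_eigenvalue m A lam \<longleftrightarrow> (\<exists>x::real^'n. x \<noteq> 0 \<and> tapply m A x = (\<chi> i. lam * (x $ i) ^ (m - 1)))"

definition SDNN :: "nat \<Rightarrow> ('n::finite) tensor set" where
  "SDNN m = {A \<in> sym_tensors m. (\<forall>xs. 0 \<le> A xs) \<and> (\<forall>lam. H_eigenvalue m A lam \<longrightarrow> lam > 0)}"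

definition CP :: "nat \<Rightarrow> ('n::finite) tensor set" where
  "CP m = {A. \<exists>(r::nat) (u::nat \<Rightarrow> real^'n). (\<forall>k<r. \<forall>i. 0 \<le> u k $ i) \<and>
      A = (\<lambda>xs. \<Sum>k<r. tpow m (u k) xs)}"

definition SCP :: "nat \<Rightarrow> ('n::finite) tensor set" where
  "SCP m = {A. \<exists>(r::nat) (u::nat \<Rightarrow> real^'n). (\<forall>k<r. \<forall>i. 0 \<le> u k $ i) \<and>
      span (u ` {..<r}) = UNIV \<and> A = (\<lambda>xs. \<Sum>k<r. tpow m (u k) xs)}"

end

theory Submission
  imports Defs
begin

lemma prod_list_map_mult:
  "prod_list (map f xs) * prod_list (map g xs) = prod_list (map (\<lambda>j. f j * g j) xs)"
  for f g :: "'a \<Rightarrow> real"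
  by (induction xs) (auto simp: algebra_simps)

lemma lists_len_Suc:
  "{is::'a list. length is = Suc n} = (\<lambda>(a,l). a # l) ` (UNIV \<times> {l. length l = n})"
  by (auto simp: length_Suc_conv image_iff)

lemma finite_lists_len: "finite {is::('a::finite) list. length is = n}"
proof -
  have "{is::'a list. length is = n} = {xs. set xs \<subseteq> UNIV \<and> length xs = n}" by auto
  then show ?thesis using finite_lists_length_eq[of "UNIV::'a set" n] by simp
qed

lemma sum_lists_prod:
  fixes f :: "'a::finite \<Rightarrow> real"
  shows "(\<Sum>is\<in>{is::'a list. length is = n}. prod_list (map f is)) = (\<Sum>j\<in>UNIV. f j) ^ n"
proof (induction n)
  case 0
  have "{is::'a list. length is = 0} = {[]}" by auto
  then show ?case by simp
next
  case (Suc n)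
  have inj: "inj_on (\<lambda>(a,l). a # l) (UNIV \<times> {l::'a list. length l = n})"
    by (auto simp: inj_on_def)
  have "(\<Sum>is\<in>{is::'a list. length is = Suc n}. prod_list (map f is))
      = (\<Sum>(a,l)\<in>UNIV \<times> {l::'a list. length l = n}. f a * prod_list (map f l))"
    unfolding lists_len_Suc by (subst sum.reindex[OF inj]) (simp add: comp_def case_prod_unfold)
  also have "\<dots> = (\<Sum>a\<in>UNIV. \<Sum>l\<in>{l::'a list. length l = n}. f a * prod_list (map f l))"
    by (subst sum.cartesian_product) simp
  also have "\<dots> = (\<Sum>a\<in>UNIV. f a) * (\<Sum>l\<in>{l::'a list. length l = n}. prod_list (map f l))"
    by (simp add: sum_product)
  also have "\<dots> = (\<Sum>j\<in>UNIV. f j) ^ Suc n" using Suc by simp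
  finally show ?case .
qed

lemma inner_sum: "(u::real^'n::finite) \<bullet> x = (\<Sum>j\<in>UNIV. u $ j * x $ j)"
  by (simp add: inner_vec_def)

lemma tapply_cp:
  fixes u :: "nat \<Rightarrow> real^'n::finite"
  assumes "m \<ge> 1"
  shows "tapply m (\<lambda>xs. \<Sum>k<r. tpow m (u k) xs) x = (\<chi> i. \<Sum>k<r. u k $ i * (u k \<bullet> x)^(m-1))"
proof -
  have "(\<Sum>is\<in>{is::'n list. length is = m - 1}. (\<Sum>k<r. tpow m (u k) (i # is)) * (\<Prod>j\<leftarrow>is. x $ j))
      = (\<Sum>k<r. u k $ i * (u k \<bullet> x)^(m-1))" for i
  proof -
    have "(\<Sum>is\<in>{is::'n list. length is = m - 1}. (\<Sum>k<r. tpow m (u k) (i # is)) * (\<Prod>j\<leftarrow>is. x $ j))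
      = (\<Sum>is\<in>{is::'n list. length is = m - 1}. \<Sum>k<r. u k $ i * (\<Prod>j\<leftarrow>is. u k $ j * x $ j))"
    proof (rule sum.cong[OF refl])
      fix ls :: "'n list" assume "ls \<in> {is. length is = m - 1}"
      then have "length (i # ls) = m" using assms by auto
      then show "(\<Sum>k<r. tpow m (u k) (i # ls)) * (\<Prod>j\<leftarrow>ls. x $ j)
           = (\<Sum>k<r. u k $ i * (\<Prod>j\<leftarrow>ls. u k $ j * x $ j))"
        by (simp add: tpow_def sum_distrib_right prod_list_map_mult[symmetric] mult.assoc)
    qed
    also have "\<dots> = (\<Sum>k<r. u k $ i * (\<Sum>is\<in>{is::'n list. length is = m - 1}. (\<Prod>j\<leftarrow>is. u k $ j * x $ j)))"
      by (subst sum.swap) (simp add: sum_distrib_left)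
    also have "\<dots> = (\<Sum>k<r. u k $ i * (u k \<bullet> x)^(m-1))"
      by (simp add: sum_lists_prod inner_sum)
    finally show ?thesis .
  qed
  then show ?thesis unfolding tapply_def by (simp add: vec_eq_iff)
qed

lemma span_full_iff:
  fixes u :: "nat \<Rightarrow> real^'n::finite"
  shows "span (u ` {..<r}) = UNIV \<longleftrightarrow> (\<forall>x. (\<forall>k<r. u k \<bullet> x = 0) \<longrightarrow> x = 0)"
proof
  assume sp: "span (u ` {..<r}) = UNIV"
  show "\<forall>x. (\<forall>k<r. u k \<bullet> x = 0) \<longrightarrow> x = 0"
  proof (intro allI impI)
    fix x :: "real^'n" assume h: "\<forall>k<r. u k \<bullet> x = 0"
    have "orthogonal x x"
      by (rule orthogonal_to_span[of x "u ` {..<r}"]) (use sp h in \<open>auto simp: orthogonal_def inner_commute\<close>)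
    then show "x = 0" by (simp add: orthogonal_def)
  qed
next
  assume h: "\<forall>x. (\<forall>k<r. u k \<bullet> x = 0) \<longrightarrow> x = 0"
  show "span (u ` {..<r}) = UNIV"
  proof (rule ccontr)
    assume "span (u ` {..<r}) \<noteq> UNIV"
    from span_not_UNIV_orthogonal[OF this] obtain a where
      "a \<noteq> 0" "\<forall>y\<in>span (u ` {..<r}). a \<bullet> y = 0" by blast
    have "\<forall>k<r. u k \<bullet> a = 0"
    proof (intro allI impI)
      fix k assume "k < r"
      then have "u k \<in> span (u ` {..<r})" by (intro span_base) auto
      then show "u k \<bullet> a = 0" using \<open>\<forall>y\<in>span (u ` {..<r}). a \<bullet> y = 0\<close> by (metis inner_commute)
    qed
    with h \<open>a \<noteq> 0\<close> show False by blast
  qed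
qed



lemma eig_pos:
  fixes u :: "nat \<Rightarrow> real^'n::finite"
  assumes m: "m \<ge> 2" and nn: "\<forall>k<r. \<forall>i. 0 \<le> u k $ i"
    and sp: "span (u ` {..<r}) = UNIV"
    and x0: "x \<noteq> 0"
    and eq: "tapply m (\<lambda>xs. \<Sum>k<r. tpow m (u k) xs) x = (\<chi> i. lam * (x $ i) ^ (m - 1))"
  shows "lam > 0"
proof (rule ccontr)
  assume "\<not> lam > 0"
  then have lam: "lam \<le> 0" by simp
  define d where "d k = u k \<bullet> x" for k
  have m1: "m \<ge> 1" using m by simp
  have mm: "Suc (m - 1) = m" using m by simp
  have eq2: "(\<chi> i. \<Sum>k<r. u k $ i * d k ^ (m-1)) = (\<chi> i. lam * (x $ i) ^ (m - 1))"
    using eq unfolding tapply_cp[OF m1] d_def .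
  have e: "(\<Sum>k<r. u k $ i * d k ^ (m-1)) = lam * x $ i ^ (m - 1)" for i
  proof -
    have "(\<chi> i. \<Sum>k<r. u k $ i * d k ^ (m-1)) $ i = (\<chi> i. lam * (x $ i) ^ (m - 1)) $ i"
      using eq2 by (rule arg_cong[where f="\<lambda>v. v $ i"])
    then show ?thesis by (simp only: vec_lambda_beta)
  qed
  have dz: "\<forall>k<r. d k = 0"
  proof (cases "even m")
    case True
    have "(\<Sum>i\<in>UNIV. x $ i * (\<Sum>k<r. u k $ i * d k ^ (m-1))) = (\<Sum>k<r. d k ^ m)"
    proof -
      have "(\<Sum>i\<in>UNIV. x $ i * (\<Sum>k<r. u k $ i * d k ^ (m-1)))
          = (\<Sum>i\<in>UNIV. \<Sum>k<r. x $ i * (u k $ i * d k ^ (m-1)))"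
        by (simp only: sum_distrib_left)
      also have "\<dots> = (\<Sum>k<r. \<Sum>i\<in>UNIV. x $ i * (u k $ i * d k ^ (m-1)))"
        by (rule sum.swap)
      also have "\<dots> = (\<Sum>k<r. (\<Sum>i\<in>UNIV. u k $ i * x $ i) * d k ^ (m-1))"
        by (simp only: sum_distrib_right mult.assoc mult.left_commute)
      also have "\<dots> = (\<Sum>k<r. d k * d k ^ (m-1))" by (simp only: d_def inner_sum)
      also have "\<dots> = (\<Sum>k<r. d k ^ m)"
        by (simp only: power_Suc[symmetric] mm)
      finally show ?thesis .
    qed
    also have "(\<Sum>i\<in>UNIV. x $ i * (\<Sum>k<r. u k $ i * d k ^ (m-1))) = lam * (\<Sum>i\<in>UNIV. x $ i ^ m)"
    proof -
      have xi: "x $ i * (lam * x $ i ^ (m - 1)) = lam * x $ i ^ m" for i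
        by (simp only: mult.left_commute[of "x $ i" lam] power_Suc[symmetric] mm)
      have "(\<Sum>i\<in>UNIV. x $ i * (\<Sum>k<r. u k $ i * d k ^ (m-1))) = (\<Sum>i\<in>UNIV. x $ i * (lam * x $ i ^ (m - 1)))"
        by (simp only: e)
      also have "\<dots> = (\<Sum>i\<in>UNIV. lam * x $ i ^ m)" by (rule sum.cong[OF refl]) (rule xi)
      also have "\<dots> = lam * (\<Sum>i\<in>UNIV. x $ i ^ m)" by (simp only: sum_distrib_left)
      finally show ?thesis .
    qed
    finally have s: "(\<Sum>k<r. d k ^ m) = lam * (\<Sum>i\<in>UNIV. x $ i ^ m)" by (rule sym)
    have "(\<Sum>i\<in>UNIV. x $ i ^ m) \<ge> 0"
      by (intro sum_nonneg zero_le_even_power True)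
    with lam s have le: "(\<Sum>k<r. d k ^ m) \<le> 0" by (simp add: mult_nonpos_nonneg)
    have nn2: "\<forall>k\<in>{..<r}. 0 \<le> d k ^ m" using zero_le_even_power[OF True] by blast
    have "(\<Sum>k<r. d k ^ m) \<ge> 0" by (intro sum_nonneg zero_le_even_power True)
    then have "(\<Sum>k<r. d k ^ m) = 0" using le by linarith
    moreover have "((\<Sum>k<r. d k ^ m) = 0) = (\<forall>k\<in>{..<r}. d k ^ m = 0)"
      by (rule sum_nonneg_eq_0_iff) (use nn2 in auto)
    ultimately have "\<forall>k\<in>{..<r}. d k ^ m = 0" by simp
    then show ?thesis using m1 by simp
  next
    case False
    then obtain q where "m = 2 * q + 1" by (rule oddE)
    then have ev: "even (m - 1)" by simp
    have tnn: "0 \<le> u k $ i * d k ^ (m-1)" if "k < r" for k i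
    proof (rule mult_nonneg_nonneg)
      show "0 \<le> u k $ i" using nn that by blast
      show "0 \<le> d k ^ (m-1)" by (rule zero_le_even_power[OF ev])
    qed
    have "(\<Sum>k<r. u k $ i * d k ^ (m-1)) = 0" for i
    proof -
      have "0 \<le> x $ i ^ (m - 1)" by (rule zero_le_even_power[OF ev])
      then have "lam * x $ i ^ (m - 1) \<le> 0" by (rule mult_nonpos_nonneg[OF lam])
      moreover have "0 \<le> (\<Sum>k<r. u k $ i * d k ^ (m-1))" using tnn by (intro sum_nonneg) simp
      ultimately show ?thesis using e[of i] by linarith
    qed
    moreover have "((\<Sum>k<r. u k $ i * d k ^ (m-1)) = 0) = (\<forall>k\<in>{..<r}. u k $ i * d k ^ (m-1) = 0)" for i
      by (rule sum_nonneg_eq_0_iff) (use tnn in auto)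
    ultimately have z: "\<forall>k\<in>{..<r}. u k $ i * d k ^ (m-1) = 0" for i by simp
    show ?thesis
    proof (intro allI impI)
      fix k assume k: "k < r"
      show "d k = 0"
      proof (rule ccontr)
        assume dk: "d k \<noteq> 0"
        have "u k $ i = 0" for i
        proof -
          have "u k $ i * d k ^ (m-1) = 0" using z k by blast
          moreover have "d k ^ (m-1) \<noteq> 0" using dk by simp
          ultimately show ?thesis by (metis mult_eq_0_iff)
        qed
        then have "u k = 0" by (simp add: vec_eq_iff)
        then show False using dk by (simp add: d_def)
      qed
    qed
  qed
  then have "\<forall>k<r. u k \<bullet> x = 0" by (simp add: d_def)
  then have "x = 0" using sp span_full_iff[of u r] by blast
  with x0 show False by simp
qed

lemma cp_sym:
  fixes u :: "nat \<Rightarrow> real^'n::finite"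
  shows "(\<lambda>xs. \<Sum>k<r. tpow m (u k) xs) \<in> sym_tensors m"
proof -
  have pm: "prod_list (map f xs) = prod_list (map f ys)" if "mset xs = mset ys" for f :: "'n \<Rightarrow> real" and xs ys
  proof -
    have "prod_list (map f xs) = prod_mset (mset (map f xs))" by (rule prod_mset_prod_list[symmetric])
    also have "\<dots> = prod_mset (image_mset f (mset xs))" by (simp only: mset_map)
    also have "\<dots> = prod_mset (image_mset f (mset ys))" by (simp only: that)
    also have "\<dots> = prod_mset (mset (map f ys))" by (simp only: mset_map)
    also have "\<dots> = prod_list (map f ys)" by (rule prod_mset_prod_list)
    finally show ?thesis .
  qed
  have a: "\<forall>xs. length xs \<noteq> m \<longrightarrow> (\<Sum>k<r. tpow m (u k) xs) = 0"
    by (simp add: tpow_def)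
  have b: "(\<Sum>k<r. tpow m (u k) xs) = (\<Sum>k<r. tpow m (u k) ys)"
    if "length xs = m" "mset xs = mset ys" for xs ys
  proof -
    have "length ys = m" using mset_eq_length[OF that(2)] that(1) by simp
    then show ?thesis using that pm[OF that(2)] unfolding tpow_def by simp
  qed
  show ?thesis unfolding sym_tensors_def using a b by blast
qed

lemma cp_nonneg:
  fixes u :: "nat \<Rightarrow> real^'n::finite"
  assumes nn: "\<forall>k<r. \<forall>i. 0 \<le> u k $ i"
  shows "0 \<le> (\<Sum>k<r. tpow m (u k) xs)"
proof (rule sum_nonneg)
  fix k assume "k \<in> {..<r}"
  then have "\<forall>i. 0 \<le> u k $ i" using nn by simp
  then show "0 \<le> tpow m (u k) xs"
    unfolding tpow_def by (auto intro!: prod_list_nonneg)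
qed

theorem mainTheorem12:
  fixes m :: nat
  assumes "m \<ge> 2"
  shows "(CP m :: ('n::finite) tensor set) \<inter> SDNN m = SCP m"
proof
  show "(CP m :: 'n tensor set) \<inter> SDNN m \<subseteq> SCP m"
  proof
    fix A :: "'n tensor" assume A: "A \<in> CP m \<inter> SDNN m"
    then obtain r and u :: "nat \<Rightarrow> real^'n" where nn: "\<forall>k<r. \<forall>i. 0 \<le> u k $ i"
      and Ad: "A = (\<lambda>xs. \<Sum>k<r. tpow m (u k) xs)" unfolding CP_def by blast
    have "span (u ` {..<r}) = UNIV"
    proof (rule ccontr)
      assume "span (u ` {..<r}) \<noteq> UNIV"
      then obtain x :: "real^'n" where x: "x \<noteq> 0" "\<forall>k<r. u k \<bullet> x = 0"
        using span_full_iff[of u r] by blast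
      have z0: "(0::real) ^ (m - 1) = 0" using assms by simp
      have "tapply m A x = (\<chi> i. 0 * (x $ i) ^ (m - 1))"
        using assms x unfolding Ad by (subst tapply_cp) (auto simp: vec_eq_iff power_0_left)
      then have "H_eigenvalue m A 0" using x unfolding H_eigenvalue_def by blast
      with A show False unfolding SDNN_def by auto
    qed
    with nn Ad show "A \<in> SCP m" unfolding SCP_def by blast
  qed
next
  show "SCP m \<subseteq> (CP m :: 'n tensor set) \<inter> SDNN m"
  proof
    fix A :: "'n tensor" assume "A \<in> SCP m"
    then obtain r and u :: "nat \<Rightarrow> real^'n" where nn: "\<forall>k<r. \<forall>i. 0 \<le> u k $ i"
      and sp: "span (u ` {..<r}) = UNIV"
      and Ad: "A = (\<lambda>xs. \<Sum>k<r. tpow m (u k) xs)" unfolding SCP_def by blast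
    have "A \<in> CP m" using nn Ad unfolding CP_def by blast
    moreover have "A \<in> SDNN m"
      unfolding SDNN_def H_eigenvalue_def
      using cp_sym[where r=r and m=m and u=u] cp_nonneg[OF nn] eig_pos[OF assms nn sp] Ad by auto
    ultimately show "A \<in> CP m \<inter> SDNN m" by blast
  qed
qed

end
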